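(* Let $\alpha\in\mathcal{O}_K$ be such that $\alpha^2$ is (additively) indecomposable. Then there is $j\geq-1$ such that $\alpha\in\{\pm\alpha_j,\pm\alpha_j'\}$.
   Context: $D>1$ squarefree, $K=\mathbb{Q}(\sqrt D)$, $\mathcal{O}_K$ its ring of integers, $\alpha'$ the conjugate. A totally positive $\beta\in\mathcal{O}_K$ (i.e. $\beta>0,\beta'>0$) is indecomposable if it cannot be written as $\beta=\gamma+\delta$ with $\gamma,\delta\in\mathcal{O}_K$ totally positive. $\omega_D=\sqrt D$ if $D\equiv2,3\pmod4$, $\omega_D=\frac{1+\sqrt D}2$ if $D\equiv1\pmod4$, with continued fraction $[u_0;u_1,u_2,\dots]$; $p_{-1}=1,q_{-1}=0,p_0=u_0,q_0=1$, $p_{i+1}=u_{i+1}p_i+p_{i-1}$, $q_{i+1}=u_{i+1}q_i+q_{i-1}$, and $\alpha_j=p_j-q_j\omega_D'$. *)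

theory Defs
  imports Complex_Main "HOL-Computational_Algebra.Squarefree"
begin

text \<open>K = Q(sqrt D) is viewed as a subfield of the reals (sqrt D > 0).\<close>

definition omega :: "int \<Rightarrow> real" where
  "omega D = (if D mod 4 = 1 then (1 + sqrt (real_of_int D)) / 2 else sqrt (real_of_int D))"

definition omega_conj :: "int \<Rightarrow> real" where
  "omega_conj D = (if D mod 4 = 1 then (1 - sqrt (real_of_int D)) / 2 else - sqrt (real_of_int D))"

definition OK :: "int \<Rightarrow> real set" where
  "OK D = {of_int a + of_int b * omega D | a b. True}"

text \<open>Galois conjugate of an element of O_K (well defined since omega_D is irrational).\<close>
definition galois_conj :: "int \<Rightarrow> real \<Rightarrow> real" where
  "galois_conj D x = (THE y. \<exists>a b::int. x = of_int a + of_int b * omega D \<and> y = of_int a + of_int b * omega_conj D)"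

definition totally_positive :: "int \<Rightarrow> real \<Rightarrow> bool" where
  "totally_positive D x \<longleftrightarrow> x \<in> OK D \<and> x > 0 \<and> galois_conj D x > 0"

definition indecomposable :: "int \<Rightarrow> real \<Rightarrow> bool" where
  "indecomposable D b \<longleftrightarrow> totally_positive D b \<and>
     \<not> (\<exists>g d. totally_positive D g \<and> totally_positive D d \<and> b = g + d)"

fun cf_rem :: "real \<Rightarrow> nat \<Rightarrow> real" where
  "cf_rem x 0 = x"
| "cf_rem x (Suc n) = 1 / frac (cf_rem x n)"

definition cf_u :: "real \<Rightarrow> nat \<Rightarrow> int" where
  "cf_u x n = \<lfloor>cf_rem x n\<rfloor>"

text \<open>Shifted convergents: cf_P x n = p_(n-1), cf_Q x n = q_(n-1).\<close>
fun cf_P :: "real \<Rightarrow> nat \<Rightarrow> int" where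
  "cf_P x 0 = 1"
| "cf_P x (Suc 0) = cf_u x 0"
| "cf_P x (Suc (Suc n)) = cf_u x (Suc n) * cf_P x (Suc n) + cf_P x n"

fun cf_Q :: "real \<Rightarrow> nat \<Rightarrow> int" where
  "cf_Q x 0 = 0"
| "cf_Q x (Suc 0) = 1"
| "cf_Q x (Suc (Suc n)) = cf_u x (Suc n) * cf_Q x (Suc n) + cf_Q x n"

definition p :: "int \<Rightarrow> int \<Rightarrow> int" where
  "p D j = cf_P (omega D) (nat (j + 1))"

definition q :: "int \<Rightarrow> int \<Rightarrow> int" where
  "q D j = cf_Q (omega D) (nat (j + 1))"

definition alpha :: "int \<Rightarrow> int \<Rightarrow> real" where
  "alpha D j = of_int (p D j) - of_int (q D j) * omega_conj D"

end

theory Submission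
  imports Defs
begin


lemma sqrt_irrat:
  fixes D :: int assumes "D > 1" "squarefree D"
  shows "sqrt (real_of_int D) \<notin> \<rat>"
proof
  assume "sqrt (real_of_int D) \<in> \<rat>"
  then obtain m n :: nat where n: "n \<noteq> 0" and sq: "\<bar>sqrt (real_of_int D)\<bar> = m / n" and cop: "coprime m n"
    by (rule Rats_abs_nat_div_natE)
  have "\<bar>sqrt (real_of_int D)\<bar> = sqrt (real_of_int D)" using assms(1) by simp
  then have "real m = sqrt (real_of_int D) * n" using n sq by (simp add: field_simps)
  then have "(real m)^2 = real_of_int D * (real n)^2" using assms(1) by (simp add: power_mult_distrib)
  then have eq: "int m ^ 2 = D * int n ^ 2"
    by (metis of_int_eq_iff of_int_mult of_int_of_nat_eq of_int_power)
  have "int n ^ 2 dvd int m ^ 2" using eq by simp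
  moreover have "coprime (int n ^ 2) (int m ^ 2)" using cop by (simp add: coprime_commute)
  ultimately have "is_unit (int n ^ 2)"
    using coprime_absorb_right coprime_commute by (metis coprime_common_divisor dvd_refl)
  then have "int n = 1 \<or> int n = -1" using power2_eq_1_iff[of "int n"] by simp
  then have "n = 1" by auto
  then have "int m ^ 2 = D" using eq by simp
  then have "int m dvd 1" using assms(2) squarefreeD by (metis dvd_refl)
  then have "m = 1" by simp
  then show False using \<open>int m ^ 2 = D\<close> assms(1) by simp
qed


lemma cf_rem_irrat: assumes "w \<notin> \<rat>" shows "cf_rem w k \<notin> \<rat>"
proof (induction k)
  case 0 then show ?case using assms by simp
next
  case (Suc k)
  show ?case
  proof
    assume "cf_rem w (Suc k) \<in> \<rat>"
    then have "1 / frac (cf_rem w k) \<in> \<rat>" by simp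
    then have "frac (cf_rem w k) \<in> \<rat>"
      by (metis Rats_divide Rats_1 div_by_1 divide_divide_eq_right mult_1)
    then have "frac (cf_rem w k) + of_int \<lfloor>cf_rem w k\<rfloor> \<in> \<rat>" by simp
    then show False using Suc by (simp add: frac_def)
  qed
qed

lemma frac_pos: assumes "w \<notin> \<rat>" shows "frac (cf_rem w k) > 0" "frac (cf_rem w k) < 1"
proof -
  have "cf_rem w k \<notin> \<int>" using cf_rem_irrat[OF assms] Ints_subset_Rats by blast
  then show "frac (cf_rem w k) > 0" using frac_ge_0 frac_eq_0_iff
    by (metis order_le_less)
  show "frac (cf_rem w k) < 1" by (rule frac_lt_1)
qed

lemma cf_u_pos: assumes "w \<notin> \<rat>" shows "cf_u w (Suc k) \<ge> 1"
proof -
  have "cf_rem w (Suc k) > 1" using frac_pos[OF assms, of k]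
    by (simp add: less_divide_eq)
  then show ?thesis unfolding cf_u_def by linarith
qed

definition Del :: "real \<Rightarrow> nat \<Rightarrow> real" where
  "Del w k = of_int (cf_P w k) - of_int (cf_Q w k) * w"

definition Ee :: "real \<Rightarrow> real \<Rightarrow> nat \<Rightarrow> real" where
  "Ee w w' k = of_int (cf_P w k) - of_int (cf_Q w k) * w'"

lemma Del_rec: assumes "w \<notin> \<rat>" shows "Del w (Suc k) = - frac (cf_rem w k) * Del w k"
proof (induction k)
  case 0 then show ?case by (simp add: Del_def cf_u_def frac_def)
next
  case (Suc k)
  have fk: "frac (cf_rem w k) > 0" using frac_pos[OF assms] by simp
  have r: "cf_rem w (Suc k) = 1 / frac (cf_rem w k)" by simp
  have "Del w k = - cf_rem w (Suc k) * Del w (Suc k)" using Suc fk r by (simp add: field_simps)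
  moreover have "Del w (Suc (Suc k)) = of_int (cf_u w (Suc k)) * Del w (Suc k) + Del w k"
    by (simp add: Del_def algebra_simps)
  ultimately have "Del w (Suc (Suc k)) = (of_int (cf_u w (Suc k)) - cf_rem w (Suc k)) * Del w (Suc k)"
    by (simp add: algebra_simps)
  then show ?case by (simp add: cf_u_def frac_def)
qed

lemma Del_nz: assumes "w \<notin> \<rat>" shows "Del w k \<noteq> 0"
proof (induction k)
  case 0 then show ?case by (simp add: Del_def)
next
  case (Suc k) then show ?case using Del_rec[OF assms] frac_pos[OF assms, of k] by simp
qed

lemma Del_alt: assumes "w \<notin> \<rat>" shows "Del w k * Del w (Suc k) < 0"
proof -
  have "Del w k * Del w (Suc k) = - frac (cf_rem w k) * (Del w k)^2"
    using Del_rec[OF assms] by (simp add: power2_eq_square)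
  moreover have "(Del w k)^2 > 0" using Del_nz[OF assms] by simp
  ultimately show ?thesis using frac_pos[OF assms, of k] by (simp add: mult_pos_pos)
qed

lemma Ee_grow: assumes "w \<notin> \<rat>" "w > 1" "w' < 0"
  shows "1 \<le> Ee w w' k \<and> Ee w w' k < Ee w w' (Suc k) \<and> real k \<le> Ee w w' (Suc k)"
proof (induction k)
  case 0
  have "cf_u w 0 \<ge> 1" using assms(2) by (simp add: cf_u_def)
  then have "Ee w w' 1 > 1" using assms(3) by (simp add: Ee_def)
  then show ?case by (simp add: Ee_def)
next
  case (Suc k)
  have u: "real_of_int (cf_u w (Suc k)) \<ge> 1" using cf_u_pos[OF assms(1)] by simp
  have e: "Ee w w' (Suc (Suc k)) = of_int (cf_u w (Suc k)) * Ee w w' (Suc k) + Ee w w' k"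
    by (simp add: Ee_def algebra_simps)
  have "of_int (cf_u w (Suc k)) * Ee w w' (Suc k) \<ge> Ee w w' (Suc k)"
    using u Suc by (simp add: mult_le_cancel_right1)
  then have m: "Ee w w' (Suc (Suc k)) \<ge> Ee w w' (Suc k) + Ee w w' k" using e by linarith
  have a1: "1 \<le> Ee w w' (Suc k)" using Suc by linarith
  have a2: "Ee w w' (Suc k) < Ee w w' (Suc (Suc k))" using m Suc by linarith
  have a3: "real (Suc k) \<le> Ee w w' (Suc (Suc k))" using m Suc by simp
  show ?case using a1 a2 a3 by blast
qed

lemma det_cf: "\<bar>cf_P w (Suc k) * cf_Q w k - cf_P w k * cf_Q w (Suc k)\<bar> = 1"
proof (induction k)
  case 0 then show ?case by simp
next
  case (Suc k)
  have "cf_P w (Suc (Suc k)) * cf_Q w (Suc k) - cf_P w (Suc k) * cf_Q w (Suc (Suc k))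
     = - (cf_P w (Suc k) * cf_Q w k - cf_P w k * cf_Q w (Suc k))"
    by (simp add: algebra_simps)
  then show ?case using Suc by simp
qed


lemma irr_lin: fixes z :: real assumes "z \<notin> \<rat>" "of_int a + of_int b * z = 0" shows "a = 0 \<and> b = 0"
proof (cases "b = 0")
  case True then show ?thesis using assms by simp
next
  case False
  then have "z = - of_int a / of_int b" using assms(2) by (simp add: field_simps)
  then have "z \<in> \<rat>" by simp
  then show ?thesis using assms(1) by simp
qed

lemma abs_add_same: fixes p q :: real assumes "p * q > 0" shows "\<bar>p + q\<bar> = \<bar>p\<bar> + \<bar>q\<bar>"
  using assms by (cases "p > 0"; cases "q > 0") (auto simp: zero_less_mult_iff)

lemma core:
  fixes w w' :: real and t nn x y :: int
  assumes wt: "w + w' = of_int t" and wn: "w * w' = of_int nn" and irr: "w \<notin> \<rat>"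
    and w1: "w > 1" and w'0: "w' < 0"
    and Apos: "of_int x - of_int y * w' > 0"
    and Ab: "\<bar>of_int x - of_int y * w\<bar> < of_int x - of_int y * w'"
    and R: "\<forall>u v::int. (u,v) \<noteq> (0,0) \<longrightarrow> \<not>(\<bar>of_int u - of_int v * w'\<bar> < \<bar>of_int x - of_int y * w'\<bar> \<and>
               \<bar>of_int u - of_int v * w\<bar> < \<bar>of_int x - of_int y * w\<bar>)"
  shows "\<exists>k. x = cf_P w k \<and> y = cf_Q w k"
proof -
  define A where "A = of_int x - of_int y * w'"
  define A' where "A' = of_int x - of_int y * w"
  have irr': "w' \<notin> \<rat>"
  proof
    assume "w' \<in> \<rat>"
    then have "of_int t - w' \<in> \<rat>" by simp
    moreover have "w = of_int t - w'" using wt by linarith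
    ultimately show False using irr by simp
  qed
  have A'nz: "A' \<noteq> 0"
  proof
    assume "A' = 0"
    then have "of_int x + of_int (-y) * w = 0" unfolding A'_def by simp
    then have "x = 0 \<and> -y = 0" by (rule irr_lin[OF irr])
    then show False using Apos by simp
  qed
  have "A * A' = of_int (x*x - x*y*t + y*y*nn)"
  proof -
    have "A * A' = of_int x * of_int x - of_int x * of_int y * (w + w') + of_int y * of_int y * (w * w')"
      unfolding A_def A'_def by (simp add: algebra_simps)
    then show ?thesis using wt wn by simp
  qed
  moreover have "x*x - x*y*t + y*y*nn \<noteq> 0"
  proof
    assume "x*x - x*y*t + y*y*nn = 0"
    then have "A * A' = 0" using calculation by simp
    moreover have "A \<noteq> 0" using Apos A_def by simp
    ultimately show False using A'nz by simp
  qed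
  ultimately have "\<bar>A * A'\<bar> \<ge> 1"
  proof -
    assume AA: "A * A' = of_int (x*x - x*y*t + y*y*nn)" and nz: "x*x - x*y*t + y*y*nn \<noteq> 0"
    have "\<bar>x*x - x*y*t + y*y*nn\<bar> \<ge> 1" using nz by linarith
    then have "real_of_int \<bar>x*x - x*y*t + y*y*nn\<bar> \<ge> 1" by linarith
    then show ?thesis using AA by simp
  qed
  moreover have "\<bar>A * A'\<bar> < A * A" using Ab Apos unfolding A_def A'_def
    by (simp add: abs_mult mult_strict_left_mono)
  ultimately have AA1: "A * A > 1" by linarith
  have A1: "A > 1"
  proof (rule ccontr)
    assume "\<not> A > 1"
    then have "A \<le> 1" by simp
    moreover have "A \<ge> 0" using Apos A_def by simp
    ultimately have "A * A \<le> 1" using mult_le_one by blast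
    then show False using AA1 by simp
  qed
  let ?E = "Ee w w'"
  have grow: "\<And>k. 1 \<le> ?E k \<and> ?E k < ?E (Suc k) \<and> real k \<le> ?E (Suc k)"
    using Ee_grow[OF irr w1 w'0] by blast
  have "\<exists>k. ?E k \<le> A \<and> A < ?E (Suc k)"
  proof (rule ccontr)
    assume "\<not> ?thesis"
    then have st: "\<And>k. ?E k \<le> A \<Longrightarrow> ?E (Suc k) \<le> A" by (meson not_le)
    have "\<And>k. ?E k \<le> A"
    proof -
      fix k show "?E k \<le> A"
        by (induction k) (use A1 st in \<open>auto simp: Ee_def\<close>)
    qed
    moreover obtain k :: nat where "real k > A" using reals_Archimedean2 by blast
    ultimately show False using grow[of k] by (meson le_less_trans not_le)
  qed
  then obtain k where k1: "?E k \<le> A" and k2: "A < ?E (Suc k)" by blast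
  define P0 where "P0 = cf_P w k"
  define Q0 where "Q0 = cf_Q w k"
  define P1 where "P1 = cf_P w (Suc k)"
  define Q1 where "Q1 = cf_Q w (Suc k)"
  have Ek: "?E k = of_int P0 - of_int Q0 * w'" by (simp add: Ee_def P0_def Q0_def)
  have Ek1: "?E (Suc k) = of_int P1 - of_int Q1 * w'" by (simp add: Ee_def P1_def Q1_def)
  have Dk: "Del w k = of_int P0 - of_int Q0 * w" by (simp add: Del_def P0_def Q0_def)
  have Dk1: "Del w (Suc k) = of_int P1 - of_int Q1 * w" by (simp add: Del_def P1_def Q1_def)
  have Ekpos: "?E k \<ge> 1" using grow by blast
  have Eklt: "?E k < ?E (Suc k)" using grow by blast
  have "?E k = A"
  proof (rule ccontr)
    assume "?E k \<noteq> A"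
    with k1 have lt: "?E k < A" by simp
    define d where "d = P1 * Q0 - P0 * Q1"
    have "\<bar>d\<bar> = 1" using det_cf[of w k] unfolding d_def P0_def P1_def Q0_def Q1_def by simp
    then have "d = 1 \<or> d = -1" by linarith
    then have dd: "d * d = 1" by auto
    define a where "a = - d * (x * Q1 - y * P1)"
    define b where "b = d * (x * Q0 - y * P0)"
    have xe: "x = a * P0 + b * P1"
    proof -
      have "a * P0 + b * P1 = (d * d) * x" unfolding a_def b_def d_def by (simp add: algebra_simps)
      then show ?thesis using dd by simp
    qed
    have ye: "y = a * Q0 + b * Q1"
    proof -
      have "a * Q0 + b * Q1 = (d * d) * y" unfolding a_def b_def d_def by (simp add: algebra_simps)
      then show ?thesis using dd by simp
    qed
    have AE: "A = of_int a * ?E k + of_int b * ?E (Suc k)"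
      unfolding A_def Ek Ek1 using xe ye by (simp add: algebra_simps)
    have AD: "A' = of_int a * Del w k + of_int b * Del w (Suc k)"
      unfolding A'_def Dk Dk1 using xe ye by (simp add: algebra_simps)
    have Dnz: "Del w k \<noteq> 0" using Del_nz[OF irr] by blast
    have bigger: "\<bar>Del w k\<bar> < \<bar>A'\<bar>"
    proof (cases "b = 0")
      case True
      then have "A = of_int a * ?E k" using AE by simp
      then have "(of_int a - 1) * ?E k > 0" using lt by (simp add: algebra_simps)
      then have "of_int a > (1::real)" using Ekpos by (simp add: zero_less_mult_iff)
      moreover have "A' = of_int a * Del w k" using AD True by simp
      ultimately show ?thesis using Dnz by (simp add: abs_mult)
    next
      case False
      have ab: "a * b < 0"
      proof (cases "b > 0")
        case True
        then have "of_int b * ?E (Suc k) \<ge> ?E (Suc k)" using Ekpos Eklt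
          by (simp add: mult_le_cancel_right1)
        then have "of_int a * ?E k < 0" using AE k2 by linarith
        then have "a < 0" using Ekpos by (simp add: mult_less_0_iff)
        then show ?thesis using True by (simp add: mult_neg_pos)
      next
        case False2: False
        then have "b < 0" using False by simp
        then have "of_int (-b) * ?E (Suc k) \<ge> ?E (Suc k)" using Ekpos Eklt
          by (simp add: mult_le_cancel_right1 del: of_int_minus mult_minus_left)
        then have "of_int b * ?E (Suc k) \<le> - ?E (Suc k)" by simp
        then have "of_int a * ?E k > 0" using AE Apos A_def Ekpos Eklt by linarith
        then have "a > 0" using Ekpos by (simp add: zero_less_mult_iff)
        then show ?thesis using \<open>b < 0\<close> by (simp add: mult_pos_neg)
      qed
      have "(of_int a * Del w k) * (of_int b * Del w (Suc k)) = of_int (a*b) * (Del w k * Del w (Suc k))"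
        by (simp add: algebra_simps)
      also have "\<dots> > 0"
      proof -
        have "real_of_int (a*b) < 0" using ab by (simp only: of_int_less_0_iff)
        then show ?thesis using Del_alt[OF irr, of k] by (rule mult_neg_neg)
      qed
      finally have "\<bar>A'\<bar> = \<bar>of_int a * Del w k\<bar> + \<bar>of_int b * Del w (Suc k)\<bar>"
        using AD abs_add_same by simp
      moreover have "\<bar>of_int b * Del w (Suc k)\<bar> > 0" using False Del_nz[OF irr] by simp
      moreover have "\<bar>of_int a * Del w k\<bar> \<ge> \<bar>Del w k\<bar>"
      proof -
        have "a \<noteq> 0" using ab by auto
        then have "\<bar>real_of_int a\<bar> \<ge> 1" by linarith
        then show ?thesis by (simp add: abs_mult mult_le_cancel_right1)
      qed
      ultimately show ?thesis by linarith
    qed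
    have "(P0, Q0) \<noteq> (0,0)" using Ek Ekpos by auto
    moreover have "\<bar>of_int P0 - of_int Q0 * w'\<bar> < \<bar>of_int x - of_int y * w'\<bar>"
      using Ek lt Ekpos A_def by simp
    moreover have "\<bar>of_int P0 - of_int Q0 * w\<bar> < \<bar>of_int x - of_int y * w\<bar>"
      using bigger Dk A'_def by simp
    ultimately show False using R by blast
  qed
  then have "of_int (P0 - x) + of_int (y - Q0) * w' = 0" using Ek A_def by (simp add: algebra_simps)
  then have "P0 - x = 0 \<and> y - Q0 = 0" by (rule irr_lin[OF irr'])
  then show ?thesis unfolding P0_def Q0_def by auto
qed


definition tt :: "int \<Rightarrow> int" where "tt D = (if D mod 4 = 1 then 1 else 0)"
definition nn :: "int \<Rightarrow> int" where "nn D = (if D mod 4 = 1 then (1 - D) div 4 else - D)"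

lemma omega_facts:
  assumes "D > 1" "squarefree D"
  shows "omega D + omega_conj D = of_int (tt D)"
    and "omega D * omega_conj D = of_int (nn D)"
    and "omega D \<notin> \<rat>"
    and "omega D > 1"
    and "omega_conj D < 0"
    and "omega D - omega_conj D > 2"
proof -
  define s where "s = sqrt (real_of_int D)"
  have s2: "s * s = real_of_int D" using assms(1) unfolding s_def by simp
  have s1: "s > 1" using assms(1) unfolding s_def by simp
  have sirr: "s \<notin> \<rat>" using sqrt_irrat[OF assms] s_def by simp
  show "omega D + omega_conj D = of_int (tt D)"
    by (simp add: omega_def omega_conj_def tt_def add_divide_distrib[symmetric])
  show "omega D * omega_conj D = of_int (nn D)"
  proof (cases "D mod 4 = 1")
    case True
    then have "1 - D = 4 * ((1 - D) div 4)" by presburger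
    then have "real_of_int ((1 - D) div 4) = (1 - real_of_int D) / 4"
      by (metis (mono_tags, opaque_lifting) nonzero_mult_div_cancel_left of_int_1 of_int_diff
          of_int_mult of_int_numeral zero_neq_numeral)
    moreover have "omega D * omega_conj D = (1 - s * s) / 4"
      using True unfolding omega_def omega_conj_def s_def by (simp add: field_simps)
    ultimately show ?thesis using True s2 by (simp add: nn_def)
  next
    case False
    then show ?thesis unfolding omega_def omega_conj_def nn_def using s2 s_def by simp
  qed
  show "omega D \<notin> \<rat>"
  proof
    assume h: "omega D \<in> \<rat>"
    show False
    proof (cases "D mod 4 = 1")
      case True
      then have "s = 2 * omega D - 1" unfolding omega_def s_def by (simp add: field_simps)
      then have "s \<in> \<rat>" using h by simp
      then show False using sirr by simp
    next
      case False
      then show False using h sirr unfolding omega_def s_def by simp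
    qed
  qed
  show "omega D > 1" using s1 unfolding omega_def s_def by simp
  show "omega_conj D < 0" using s1 unfolding omega_conj_def s_def by simp
  show "omega D - omega_conj D > 2"
  proof (cases "D mod 4 = 1")
    case True
    then have "D \<ge> 5" using assms(1) by presburger
    then have "s > 2" unfolding s_def by (simp add: real_less_rsqrt)
    then show ?thesis using True unfolding omega_def omega_conj_def s_def by (simp add: field_simps)
  next
    case False
    then show ?thesis using s1 unfolding omega_def omega_conj_def s_def by simp
  qed
qed


lemma conj_rep:
  assumes "D > 1" "squarefree D"
  shows "galois_conj D (of_int a + of_int b * omega D) = of_int a + of_int b * omega_conj D"
  unfolding galois_conj_def
proof (rule the_equality)
  show "\<exists>a' b'. of_int a + of_int b * omega D = of_int a' + of_int b' * omega D \<and>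
        of_int a + of_int b * omega_conj D = of_int a' + of_int b' * omega_conj D" by blast
next
  fix y assume "\<exists>a' b'. of_int a + of_int b * omega D = of_int a' + of_int b' * omega D \<and>
        y = of_int a' + of_int b' * omega_conj D"
  then obtain a' b' where e: "of_int a + of_int b * omega D = of_int a' + of_int b' * omega D"
    and y: "y = of_int a' + of_int b' * omega_conj D" by blast
  have "of_int (a - a') + of_int (b - b') * omega D = 0" using e by (simp add: algebra_simps)
  then have "a - a' = 0 \<and> b - b' = 0" using irr_lin omega_facts(3)[OF assms] by blast
  then show "y = of_int a + of_int b * omega_conj D" using y by simp
qed

lemma conj_xy:
  assumes "D > 1" "squarefree D"
  shows "galois_conj D (of_int x - of_int y * omega_conj D) = of_int x - of_int y * omega D"
proof -
  have t: "omega_conj D = of_int (tt D) - omega D" using omega_facts(1)[OF assms] by linarith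
  have eq: "of_int x - of_int y * omega_conj D = of_int (x - y * tt D) + of_int y * omega D"
    by (simp add: t algebra_simps)
  have "galois_conj D (of_int x - of_int y * omega_conj D) = galois_conj D (of_int (x - y * tt D) + of_int y * omega D)"
    by (simp only: eq)
  also have "\<dots> = of_int (x - y * tt D) + of_int y * omega_conj D"
    by (rule conj_rep[OF assms])
  also have "\<dots> = of_int x - of_int y * omega D"
    by (simp add: t algebra_simps)
  finally show ?thesis .
qed

lemma in_OK:
  assumes "D > 1" "squarefree D"
  shows "of_int x - of_int y * omega_conj D \<in> OK D"
proof -
  have t: "omega_conj D = of_int (tt D) - omega D" using omega_facts(1)[OF assms] by linarith
  have "of_int x - of_int y * omega_conj D = of_int (x - y * tt D) + of_int y * omega D"
    by (simp add: t algebra_simps)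
  then show ?thesis unfolding OK_def by blast
qed

lemma sq_gen:
  fixes z :: real
  assumes "z * z = of_int T * z - of_int N"
  shows "(of_int x - of_int y * z)^2 = of_int (x*x - y*y*N) - of_int (2*x*y - y*y*T) * z"
proof -
  have "(of_int x - of_int y * z)^2 = of_int x * of_int x - 2 * of_int x * of_int y * z + of_int y * of_int y * (z * z)"
    by (simp add: power2_eq_square algebra_simps)
  also have "\<dots> = of_int x * of_int x - 2 * of_int x * of_int y * z + of_int y * of_int y * (of_int T * z - of_int N)"
    using assms by simp
  also have "\<dots> = of_int (x*x - y*y*N) - of_int (2*x*y - y*y*T) * z"
    by (simp add: algebra_simps)
  finally show ?thesis .
qed

lemma quad:
  assumes "D > 1" "squarefree D"
  shows "omega D * omega D = of_int (tt D) * omega D - of_int (nn D)"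
    and "omega_conj D * omega_conj D = of_int (tt D) * omega_conj D - of_int (nn D)"
proof -
  have t: "omega D + omega_conj D = of_int (tt D)" and n: "omega D * omega_conj D = of_int (nn D)"
    using omega_facts[OF assms] by auto
  show "omega D * omega D = of_int (tt D) * omega D - of_int (nn D)"
    using t n by (simp add: algebra_simps) (metis add.commute distrib_left mult.commute)
  show "omega_conj D * omega_conj D = of_int (tt D) * omega_conj D - of_int (nn D)"
    using t n by (simp add: algebra_simps) (metis distrib_left mult.commute)
qed


theorem lemma11:
  fixes D :: int and a :: real
  assumes "D > 1" and "squarefree D"
    and "a \<in> OK D"
    and "indecomposable D (a ^ 2)"
  shows "\<exists>j::int. j \<ge> -1 \<and>
           a \<in> {alpha D j, - alpha D j, galois_conj D (alpha D j), - galois_conj D (alpha D j)}"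
proof -
  have DD: "D > 1" "squarefree D" using assms by auto
  define w where "w = omega D"
  define w' where "w' = omega_conj D"
  define T where "T = tt D"
  define N where "N = nn D"
  have wt: "w + w' = of_int T" and wn: "w * w' = of_int N" and irr: "w \<notin> \<rat>"
    and w1: "w > 1" and w'0: "w' < 0" and w2: "w - w' > 2"
    using omega_facts[OF DD] unfolding w_def w'_def T_def N_def by auto
  have t': "w' = of_int T - w" using wt by linarith
  have irr': "w' \<notin> \<rat>"
  proof
    assume "w' \<in> \<rat>"
    then have "of_int T - w' \<in> \<rat>" by simp
    moreover have "w = of_int T - w'" using wt by linarith
    ultimately show False using irr by simp
  qed
  have qw: "w * w = of_int T * w - of_int N" and qw': "w' * w' = of_int T * w' - of_int N"
    using quad[OF DD] unfolding w_def w'_def T_def N_def by auto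
  have cxy: "\<And>x y. galois_conj D (of_int x - of_int y * w') = of_int x - of_int y * w"
    using conj_xy[OF DD] unfolding w_def w'_def by blast
  have okxy: "\<And>x y. of_int x - of_int y * w' \<in> OK D"
    using in_OK[OF DD] unfolding w'_def by blast
  have nz: "\<And>u v z. z \<notin> \<rat> \<Longrightarrow> (u,v) \<noteq> (0,0) \<Longrightarrow> of_int u - of_int v * z \<noteq> (0::real)"
  proof
    fix u v :: int and z :: real
    assume "z \<notin> \<rat>" "(u,v) \<noteq> (0,0)" "of_int u - of_int v * z = 0"
    then have "of_int u + of_int (-v) * z = 0" by simp
    then have "u = 0 \<and> -v = 0" by (rule irr_lin[OF \<open>z \<notin> \<rat>\<close>])
    then show False using \<open>(u,v) \<noteq> (0,0)\<close> by simp
  qed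
  obtain a0 b0 where a0: "a = of_int a0 + of_int b0 * w" using assms(3) unfolding OK_def w_def by blast
  define x where "x = a0 + b0 * T"
  define y where "y = b0"
  have aeq: "a = of_int x - of_int y * w'" unfolding a0 x_def y_def t' by (simp add: algebra_simps)
  define c where "c = of_int x - of_int y * w"
  have sqxy: "\<And>x y. (of_int x - of_int y * w')^2 = of_int (x*x - y*y*N) - of_int (2*x*y - y*y*T) * w'"
    using sq_gen[OF qw'] by blast
  have sqxy2: "\<And>x y. (of_int x - of_int y * w)^2 = of_int (x*x - y*y*N) - of_int (2*x*y - y*y*T) * w"
    using sq_gen[OF qw] by blast
  have tp: "totally_positive D (a^2)" and nodec: "\<not> (\<exists>g d. totally_positive D g \<and> totally_positive D d \<and> a^2 = g + d)"
    using assms(4) unfolding indecomposable_def by auto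
  have anz: "a \<noteq> 0" using tp unfolding totally_positive_def by auto
  have xy0: "(x,y) \<noteq> (0,0)" using anz aeq by auto
  have cnz: "c \<noteq> 0" using nz[OF irr xy0] c_def by simp
  have R0: "\<forall>u v::int. (u,v) \<noteq> (0,0) \<longrightarrow> \<not>(\<bar>of_int u - of_int v * w'\<bar> < \<bar>a\<bar> \<and> \<bar>of_int u - of_int v * w\<bar> < \<bar>c\<bar>)"
  proof (intro allI impI notI)
    fix u v :: int
    assume uv: "(u,v) \<noteq> (0,0)" and h: "\<bar>of_int u - of_int v * w'\<bar> < \<bar>a\<bar> \<and> \<bar>of_int u - of_int v * w\<bar> < \<bar>c\<bar>"
    define mu where "mu = of_int u - of_int v * w'"
    define mu' where "mu' = of_int u - of_int v * w"
    define X1 where "X1 = u*u - v*v*N"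
    define Y1 where "Y1 = 2*u*v - v*v*T"
    define Xa where "Xa = x*x - y*y*N"
    define Ya where "Ya = 2*x*y - y*y*T"
    have g1: "mu^2 = of_int X1 - of_int Y1 * w'" unfolding mu_def X1_def Y1_def by (rule sqxy)
    have g2: "mu'^2 = of_int X1 - of_int Y1 * w" unfolding mu'_def X1_def Y1_def by (rule sqxy2)
    have a1: "a^2 = of_int Xa - of_int Ya * w'" unfolding aeq Xa_def Ya_def by (rule sqxy)
    have a2: "c^2 = of_int Xa - of_int Ya * w" unfolding c_def Xa_def Ya_def by (rule sqxy2)
    have munz: "mu \<noteq> 0" using nz[OF irr' uv] mu_def by simp
    have mu'nz: "mu' \<noteq> 0" using nz[OF irr uv] mu'_def by simp
    have mp1: "of_int X1 - of_int Y1 * w' > 0" using munz g1 by (metis zero_less_power2)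
    have mp2: "of_int X1 - of_int Y1 * w > 0" using mu'nz g2 by (metis zero_less_power2)
    have "totally_positive D (mu^2)"
      unfolding totally_positive_def g1 using okxy cxy mp1 mp2 by simp
    moreover have "totally_positive D (a^2 - mu^2)"
    proof -
      have e1: "a^2 - mu^2 = of_int (Xa - X1) - of_int (Ya - Y1) * w'" unfolding a1 g1 by (simp add: algebra_simps)
      have e2: "c^2 - mu'^2 = of_int (Xa - X1) - of_int (Ya - Y1) * w" unfolding a2 g2 by (simp add: algebra_simps)
      have "\<bar>mu\<bar>^2 < \<bar>a\<bar>^2" using h mu_def by (intro power_strict_mono) auto
      then have p1: "a^2 - mu^2 > 0" by simp
      have "\<bar>mu'\<bar>^2 < \<bar>c\<bar>^2" using h mu'_def by (intro power_strict_mono) auto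
      then have p2: "c^2 - mu'^2 > 0" by simp
      have q1: "of_int (Xa - X1) - of_int (Ya - Y1) * w' > 0" using p1 e1 by linarith
      have q2: "of_int (Xa - X1) - of_int (Ya - Y1) * w > 0" using p2 e2 by linarith
      show ?thesis unfolding totally_positive_def e1 using okxy cxy q1 q2 by presburger
    qed
    ultimately show False using nodec by force
  qed
  have key: "\<And>x2 y2 A C. A = of_int x2 - of_int y2 * w' \<Longrightarrow> C = of_int x2 - of_int y2 * w \<Longrightarrow>
     (\<forall>u v::int. (u,v) \<noteq> (0,0) \<longrightarrow> \<not>(\<bar>of_int u - of_int v * w'\<bar> < \<bar>A\<bar> \<and> \<bar>of_int u - of_int v * w\<bar> < \<bar>C\<bar>)) \<Longrightarrow>
     A > 0 \<Longrightarrow> \<bar>C\<bar> < A \<Longrightarrow> \<exists>j::int. j \<ge> -1 \<and> A = alpha D j \<and> C = galois_conj D (alpha D j)"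
  proof -
    fix x2 y2 :: int and A C :: real
    assume A: "A = of_int x2 - of_int y2 * w'" and C: "C = of_int x2 - of_int y2 * w"
      and R: "\<forall>u v::int. (u,v) \<noteq> (0,0) \<longrightarrow> \<not>(\<bar>of_int u - of_int v * w'\<bar> < \<bar>A\<bar> \<and> \<bar>of_int u - of_int v * w\<bar> < \<bar>C\<bar>)"
      and pos: "A > 0" and lt: "\<bar>C\<bar> < A"
    obtain k where k: "x2 = cf_P w k \<and> y2 = cf_Q w k"
      using core[OF wt wn irr w1 w'0, of x2 y2] A C R pos lt by auto
    define j where "j = int k - 1"
    have pj: "p D j = x2" "q D j = y2" unfolding p_def q_def j_def using k w_def by auto
    have al: "alpha D j = A" unfolding alpha_def pj A w'_def by simp
    have "galois_conj D (alpha D j) = C" unfolding al A C using cxy by simp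
    moreover have "j \<ge> -1" unfolding j_def by simp
    ultimately show "\<exists>j::int. j \<ge> -1 \<and> A = alpha D j \<and> C = galois_conj D (alpha D j)" using al by auto
  qed
  have R0neg: "\<forall>u v::int. (u,v) \<noteq> (0,0) \<longrightarrow> \<not>(\<bar>of_int u - of_int v * w'\<bar> < \<bar>-a\<bar> \<and> \<bar>of_int u - of_int v * w\<bar> < \<bar>-c\<bar>)"
    using R0 by simp
  have R0sw: "\<forall>u v::int. (u,v) \<noteq> (0,0) \<longrightarrow> \<not>(\<bar>of_int u - of_int v * w'\<bar> < \<bar>c\<bar> \<and> \<bar>of_int u - of_int v * w\<bar> < \<bar>a\<bar>)"
  proof (intro allI impI)
    fix u v :: int assume uv: "(u,v) \<noteq> (0,0)"
    then have uv2: "(u - v*T, -v) \<noteq> (0,0)" by auto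
    have e1: "of_int (u - v*T) - of_int (-v) * w' = of_int u - of_int v * w" unfolding t' by (simp add: algebra_simps)
    have e2: "of_int (u - v*T) - of_int (-v) * w = of_int u - of_int v * w'" unfolding t' by (simp add: algebra_simps)
    show "\<not>(\<bar>of_int u - of_int v * w'\<bar> < \<bar>c\<bar> \<and> \<bar>of_int u - of_int v * w\<bar> < \<bar>a\<bar>)"
      using R0[rule_format, OF uv2] unfolding e1 e2 by blast
  qed
  have R0swneg: "\<forall>u v::int. (u,v) \<noteq> (0,0) \<longrightarrow> \<not>(\<bar>of_int u - of_int v * w'\<bar> < \<bar>-c\<bar> \<and> \<bar>of_int u - of_int v * w\<bar> < \<bar>-a\<bar>)"
    using R0sw by simp
  have ex1: "of_int (x - y*T) - of_int (-y) * w' = c" unfolding c_def t' by (simp add: algebra_simps)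
  have ex2: "of_int (x - y*T) - of_int (-y) * w = a" unfolding aeq t' by (simp add: algebra_simps)
  have ex3: "of_int (y*T - x) - of_int y * w' = -c" unfolding c_def t' by (simp add: algebra_simps)
  have ex4: "of_int (y*T - x) - of_int y * w = -a" unfolding aeq t' by (simp add: algebra_simps)
  have ex5: "of_int (-x) - of_int (-y) * w' = -a" unfolding aeq by simp
  have ex6: "of_int (-x) - of_int (-y) * w = -c" unfolding c_def by simp
  consider "\<bar>c\<bar> < \<bar>a\<bar>" | "\<bar>a\<bar> < \<bar>c\<bar>" | "\<bar>a\<bar> = \<bar>c\<bar>" by linarith
  then show ?thesis
  proof cases
    case 1
    show ?thesis
    proof (cases "a > 0")
      case True
      obtain j where "j \<ge> -1" "a = alpha D j" using key[OF aeq c_def R0] True 1 by auto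
      then show ?thesis by auto
    next
      case False
      then have "-a > 0" using anz by simp
      then obtain j where "j \<ge> -1" "-a = alpha D j" using key[OF ex5[symmetric] ex6[symmetric] R0neg] 1 by auto
      then show ?thesis by (intro exI[of _ j]) auto
    qed
  next
    case 2
    show ?thesis
    proof (cases "c > 0")
      case True
      obtain j where "j \<ge> -1" "a = galois_conj D (alpha D j)"
        using key[OF ex1[symmetric] ex2[symmetric] R0sw] True 2 by auto
      then show ?thesis by auto
    next
      case False
      then have "-c > 0" using cnz by simp
      then obtain j where "j \<ge> -1" "-a = galois_conj D (alpha D j)"
        using key[OF ex3[symmetric] ex4[symmetric] R0swneg] 2 by auto
      then show ?thesis by (intro exI[of _ j]) auto
    qed
  next
    case 3
    have noR: "\<not>(1 < \<bar>a\<bar> \<and> 1 < \<bar>c\<bar>)" using R0[rule_format, of 1 0] by simp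
    show ?thesis
    proof (cases "y = 0")
      case True
      then have "a = of_int x" using aeq by simp
      moreover have "c = of_int x" using True c_def by simp
      ultimately have "\<bar>x\<bar> \<le> 1" "x \<noteq> 0" using noR anz by auto
      then have "x = 1 \<or> x = -1" by linarith
      moreover have "alpha D (-1) = 1" by (simp add: alpha_def p_def q_def)
      ultimately show ?thesis using \<open>a = of_int x\<close> by (intro exI[of _ "-1"]) auto
    next
      case False
      have "a - c = of_int y * (w - w')" unfolding aeq c_def by (simp add: algebra_simps)
      then have "\<bar>a - c\<bar> = \<bar>of_int y\<bar> * (w - w')" using w2 by (simp add: abs_mult)
      moreover have "\<bar>real_of_int y\<bar> \<ge> 1" using False by linarith
      ultimately have "\<bar>a - c\<bar> > 2" using w2
        by (smt (verit) mult_le_cancel_right1)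
      then have "\<bar>a\<bar> > 1" using 3 by linarith
      then show ?thesis using noR 3 by simp
    qed
  qed
qed

end
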